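(* Let $n\ge1$, $k=1$, $m\ge1$, let $O\subseteq\mathbb{R}^n\times\mathbb{R}$ be open, let $U\subseteq\mathbb{R}^m$ be nonempty and closed, and let $\Omega=\{y\in\mathbb{R}:\exists x \text{ with } (x,y)\in O\}$. Let $A:\Omega\times U\to\mathbb{R}^{n\times n}$, $b:\Omega\times U\to\mathbb{R}^n$, $c_{1,j}:\Omega\to\mathbb{R}$ ($j=1,\dots,n$) and $f_1:\Omega\times U\to\mathbb{R}$ be locally Lipschitz, and consider the system $$\dot x(t)=A(y(t),u(t))x(t)+b(y(t),u(t)),\qquad \dot y(t)=f_1(y(t),u(t))+\sum_{j=1}^n c_{1,j}(y(t))x_j(t),$$ with $(x(t),y(t))\in O$, $u(t)\in U$. Assume that for every $(x_0,y_0)\in O$ and every $u\in L^\infty_{loc}(\mathbb{R}_+;U)$ there is a unique solution $t\mapsto (x(t,x_0,y_0;u),y(t,x_0,y_0;u))\in O$ on $[0,+\infty)$ satisfying the equations a.e. with initial value $(x_0,y_0)$. Let $r>0$, $(x_0,y_0)\in O$ and $u\in L^\infty([0,r];U)$, and suppose there exist $t,t_1,\dots,t_{n-1}\in[0,r]$ such that $$\det\begin{bmatrix} C'(t,x_0,y_0;u)\Phi(t,x_0,y_0;u)\\ C'(t_1,x_0,y_0;u)\Phi(t_1,x_0,y_0;u)\\ \vdots\\ C'(t_{n-1},x_0,y_0;u)\Phi(t_{n-1},x_0,y_0;u)\end{bmatrix}\neq0 .$$ Then the input $u$ strongly distinguishes the state $(x_0,y_0)$ in time $r$. Moreover, the symmetric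 matrix $Q(r,x_0,y_0;u)$ is positive definite and $x_0=Q^{-1}(r,x_0,y_0;u)\int_0^r q(t,x_0,y_0;u)p(t,x_0,y_0;u)\,dt$.
   Context: For $u\in L^\infty([0,r];U)$, solutions on $[0,r]$ are obtained from any extension of $u$ to $L^\infty_{loc}(\mathbb{R}_+;U)$. Definition: $u\in L^\infty([0,r];U)$ strongly distinguishes $(x_0,y_0)\in O$ in time $r>0$ if for every $(\xi,\eta)\in O$ with $(\xi,\eta)\neq(x_0,y_0)$, $\max_{t\in[0,r]}|y(t,x_0,y_0;u)-y(t,\xi,\eta;u)|>0$. Notation: $y(t)=y(t,x_0,y_0;u)$; $\Phi(t,x_0,y_0;u)$ solves $\frac{d}{dt}\Phi=A(y(t),u(t))\Phi$, $\Phi(0)=I$; $C'(t,x_0,y_0;u)=(c_{1,1}(y(t)),\dots,c_{1,n}(y(t)))\in\mathbb{R}^{1\times n}$ and $C=(C')'$; $\theta(t,x_0,y_0;u)=\int_0^t\Phi(t)\Phi^{-1}(\tau)b(y(\tau),u(\tau))d\tau$; $q(t,x_0,y_0;u)=\int_0^t\Phi'(s)C(s)ds\in\mathbb{R}^n$; $p(t,x_0,y_0;u)=y(t)-y_0-\int_0^t f_1(y(s),u(s))ds-\int_0^tC'(s)\theta(s)ds$; $Q(r,x_0,y_0;u)=\int_0^r q(t)q'(t)dt$. A prime denotes transpose. *)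

theory Defs
  imports "HOL-Analysis.Analysis"
begin

definition locally_lipschitz_on :: "'a::metric_space set \<Rightarrow> ('a \<Rightarrow> 'b::metric_space) \<Rightarrow> bool" where
  "locally_lipschitz_on S g \<longleftrightarrow> (\<forall>p\<in>S. \<exists>e>0. \<exists>L. L-lipschitz_on (cball p e \<inter> S) g)"

text \<open>Inputs in L-infinity-loc(R_+; U) (a representative: Lebesgue measurable,
  U-valued on [0,oo), bounded on every compact time interval).\<close>
definition admissible_input :: "'m::euclidean_space set \<Rightarrow> (real \<Rightarrow> 'm) \<Rightarrow> bool" where
  "admissible_input U u \<longleftrightarrow> u \<in> borel_measurable lebesgue \<and> (\<forall>t\<ge>0. u t \<in> U) \<and>
     (\<forall>T. bounded (u ` {0..T}))"

definition sys_rhs ::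
  "(real \<Rightarrow> 'm \<Rightarrow> real^'n^'n) \<Rightarrow> (real \<Rightarrow> 'm \<Rightarrow> real^'n) \<Rightarrow> (real \<Rightarrow> real^'n) \<Rightarrow>
   (real \<Rightarrow> 'm \<Rightarrow> real) \<Rightarrow> (real \<Rightarrow> 'm) \<Rightarrow> (real \<Rightarrow> (real^'n) \<times> real) \<Rightarrow> real \<Rightarrow> (real^'n) \<times> real" where
  "sys_rhs A b c f1 u z s =
     (A (snd (z s)) (u s) *v fst (z s) + b (snd (z s)) (u s),
      f1 (snd (z s)) (u s) + c (snd (z s)) \<bullet> fst (z s))"

text \<open>Solution on [0,oo) in the Caratheodory (integral) sense, staying in Ost.\<close>
definition is_solution ::
  "((real^'n) \<times> real) set \<Rightarrow> (real \<Rightarrow> 'm \<Rightarrow> real^'n^'n) \<Rightarrow> (real \<Rightarrow> 'm \<Rightarrow> real^'n) \<Rightarrow> (real \<Rightarrow> real^'n) \<Rightarrow>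
   (real \<Rightarrow> 'm \<Rightarrow> real) \<Rightarrow> (real \<Rightarrow> 'm) \<Rightarrow> real^'n \<Rightarrow> real \<Rightarrow> (real \<Rightarrow> (real^'n) \<times> real) \<Rightarrow> bool" where
  "is_solution Ost A b c f1 u x0 y0 z \<longleftrightarrow>
     z 0 = (x0, y0) \<and> (\<forall>t\<ge>0. z t \<in> Ost) \<and>
     (\<forall>t\<ge>0. (sys_rhs A b c f1 u z has_integral (z t - z 0)) {0..t})"

definition traj where
  "traj Ost A b c f1 u x0 y0 = (SOME z. is_solution Ost A b c f1 u x0 y0 z)"

definition ytraj where
  "ytraj Ost A b c f1 u x0 y0 t = snd (traj Ost A b c f1 u x0 y0 t)"

definition strongly_distinguishes where
  "strongly_distinguishes Ost A b c f1 u r x0 y0 \<longleftrightarrow>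
     (\<forall>\<xi> \<eta>. (\<xi>, \<eta>) \<in> Ost \<and> (\<xi>, \<eta>) \<noteq> (x0, y0) \<longrightarrow>
        (SUP t\<in>{0..r}. \<bar>ytraj Ost A b c f1 u x0 y0 t - ytraj Ost A b c f1 u \<xi> \<eta> t\<bar>) > 0)"

definition fundmat where
  "fundmat Ost A b c f1 u x0 y0 = (SOME \<Phi>. \<Phi> 0 = mat 1 \<and>
     (\<forall>t\<ge>0. ((\<lambda>s. A (ytraj Ost A b c f1 u x0 y0 s) (u s) ** \<Phi> s) has_integral (\<Phi> t - mat 1)) {0..t}))"

definition theta where
  "theta Ost A b c f1 u x0 y0 t = integral {0..t}
     (\<lambda>\<tau>. (fundmat Ost A b c f1 u x0 y0 t ** matrix_inv (fundmat Ost A b c f1 u x0 y0 \<tau>))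
            *v b (ytraj Ost A b c f1 u x0 y0 \<tau>) (u \<tau>))"

definition qfun where
  "qfun Ost A b c f1 u x0 y0 t = integral {0..t}
     (\<lambda>s. transpose (fundmat Ost A b c f1 u x0 y0 s) *v c (ytraj Ost A b c f1 u x0 y0 s))"

definition pfun where
  "pfun Ost A b c f1 u x0 y0 t =
     ytraj Ost A b c f1 u x0 y0 t - y0
     - integral {0..t} (\<lambda>s. f1 (ytraj Ost A b c f1 u x0 y0 s) (u s))
     - integral {0..t} (\<lambda>s. c (ytraj Ost A b c f1 u x0 y0 s) \<bullet> theta Ost A b c f1 u x0 y0 s)"

definition Qmat where
  "Qmat Ost A b c f1 u x0 y0 r = integral {0..r}
     (\<lambda>t. \<chi> i j. qfun Ost A b c f1 u x0 y0 t $ i * qfun Ost A b c f1 u x0 y0 t $ j)"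

end

theory Submission
  imports Defs
begin



lemma sigma_finite_lebesgue_real: "sigma_finite_measure (lebesgue :: real measure)"
proof
  show "\<exists>A. countable A \<and> A \<subseteq> sets (lebesgue::real measure) \<and> \<Union> A = space lebesgue \<and> (\<forall>a\<in>A. emeasure lebesgue a \<noteq> \<infinity>)"
  proof (intro exI conjI)
    let ?A = "range (\<lambda>n::nat. {-real n..real n})"
    show "countable ?A" by simp
    show "?A \<subseteq> sets lebesgue" by auto
    show "\<Union> ?A = space lebesgue"
    proof -
      have "x \<in> \<Union> ?A" for x :: real
      proof -
        obtain n :: nat where "\<bar>x\<bar> \<le> real n" using real_arch_simple by blast
        then show ?thesis by (auto intro!: exI[of _ n])
      qed
      then show ?thesis by auto
    qed
    show "\<forall>a\<in>?A. emeasure lebesgue a \<noteq> \<infinity>"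
      by (auto simp: emeasure_lborel_cbox_eq)
  qed
qed

interpretation LL: pair_sigma_finite "lebesgue :: real measure" "lebesgue :: real measure"
  by (simp add: pair_sigma_finite.intro sigma_finite_lebesgue_real)

lemma tri_meas: "{p::real\<times>real. snd p \<le> fst p} \<in> sets (lebesgue \<Otimes>\<^sub>M lebesgue)"
proof -
  have f: "fst \<in> borel_measurable (lebesgue \<Otimes>\<^sub>M (lebesgue::real measure))"
    by (rule measurable_compose[OF measurable_fst]) (simp add: measurable_lborel1 measurable_completion)
  have s: "snd \<in> borel_measurable (lebesgue \<Otimes>\<^sub>M (lebesgue::real measure))"
    by (rule measurable_compose[OF measurable_snd]) (simp add: measurable_completion)
  have "{w \<in> space (lebesgue \<Otimes>\<^sub>M (lebesgue::real measure)). snd w \<le> fst w} \<in> sets (lebesgue \<Otimes>\<^sub>M lebesgue)"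
    using s f by measurable
  then show ?thesis by (simp add: space_pair_measure)
qed

lemma ind_int_eq:
  fixes g :: "real \<Rightarrow> real"
  assumes g: "g absolutely_integrable_on {a..t}" and s: "s \<in> {a..t}"
  shows "(\<integral>\<tau>. indicator {..s} \<tau> * (indicator {a..t} \<tau> * g \<tau>) \<partial>lebesgue) = integral {a..s} g"
    "(\<integral>\<tau>. indicator {..<s} \<tau> * (indicator {a..t} \<tau> * g \<tau>) \<partial>lebesgue) = integral {a..s} g"
proof -
  have gs: "g absolutely_integrable_on {a..s}"
    by (rule set_integrable_subset[OF g]) (use s in auto)
  have gs': "g absolutely_integrable_on {a..<s}"
    by (rule set_integrable_subset[OF g]) (use s in auto)
  have "(\<lambda>\<tau>. indicator {..s} \<tau> * (indicator {a..t} \<tau> * g \<tau>)) = (\<lambda>\<tau>. indicator {a..s} \<tau> *\<^sub>R g \<tau>)"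
    using s by (auto simp: indicator_def)
  then show "(\<integral>\<tau>. indicator {..s} \<tau> * (indicator {a..t} \<tau> * g \<tau>) \<partial>lebesgue) = integral {a..s} g"
    using set_lebesgue_integral_eq_integral(2)[OF gs] by (simp add: set_lebesgue_integral_def)
  have "(\<lambda>\<tau>. indicator {..<s} \<tau> * (indicator {a..t} \<tau> * g \<tau>)) = (\<lambda>\<tau>. indicator {a..<s} \<tau> *\<^sub>R g \<tau>)"
    using s by (auto simp: indicator_def)
  moreover have "integral {a..<s} g = integral {a..s} g"
    by (rule integral_spike_set) (auto intro: negligible_subset[of "{s}"])
  ultimately show "(\<integral>\<tau>. indicator {..<s} \<tau> * (indicator {a..t} \<tau> * g \<tau>) \<partial>lebesgue) = integral {a..s} g"
    using set_lebesgue_integral_eq_integral(2)[OF gs'] by (simp add: set_lebesgue_integral_def)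
qed

lemma scalar_pr:
  fixes f g :: "real \<Rightarrow> real"
  assumes f: "f absolutely_integrable_on {a..t}" and g: "g absolutely_integrable_on {a..t}"
  shows "((\<lambda>s. f s * integral {a..s} g + integral {a..s} f * g s) has_integral
           (integral {a..t} f * integral {a..t} g)) {a..t}"
proof -
  let ?I = "{a..t}"
  define F0 where "F0 = (\<lambda>s. indicator ?I s * f s)"
  define G0 where "G0 = (\<lambda>s. indicator ?I s * g s)"
  have iF: "integrable lebesgue F0" using f by (simp add: F0_def set_integrable_def)
  have iG: "integrable lebesgue G0" using g by (simp add: G0_def set_integrable_def)
  have mF[measurable]: "F0 \<in> borel_measurable lebesgue" using iF by auto
  have mG[measurable]: "G0 \<in> borel_measurable lebesgue" using iG by auto
  define \<phi> where "\<phi> p = F0 (fst p) * G0 (snd p)" for p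
  have m\<phi>: "\<phi> \<in> borel_measurable (lebesgue \<Otimes>\<^sub>M lebesgue)"
    unfolding \<phi>_def by measurable
  have i\<phi>: "integrable (lebesgue \<Otimes>\<^sub>M lebesgue) \<phi>"
  proof (rule LL.Fubini_integrable[OF m\<phi>])
    show "integrable lebesgue (\<lambda>x. \<integral>y. norm (\<phi> (x, y)) \<partial>lebesgue)"
      using iF iG by (simp add: \<phi>_def abs_mult)
    show "AE x in lebesgue. integrable lebesgue (\<lambda>y. \<phi> (x, y))"
      using iG by (simp add: \<phi>_def)
  qed
  define Tri where "Tri = {p::real\<times>real. snd p \<le> fst p}"
  have Tri: "Tri \<in> sets (lebesgue \<Otimes>\<^sub>M lebesgue)" using tri_meas by (simp add: Tri_def)
  have Tri': "- Tri \<in> sets (lebesgue \<Otimes>\<^sub>M lebesgue)"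
    using sets.compl_sets[OF Tri] by (simp add: space_pair_measure Compl_eq_Diff_UNIV)
  have i1: "integrable (lebesgue \<Otimes>\<^sub>M lebesgue) (\<lambda>p. indicator Tri p * \<phi> p)"
    using integrable_mult_indicator[OF Tri i\<phi>] by simp
  have i2: "integrable (lebesgue \<Otimes>\<^sub>M lebesgue) (\<lambda>p. indicator (- Tri) p * \<phi> p)"
    using integrable_mult_indicator[OF Tri' i\<phi>] by simp
  have split: "\<phi> p = indicator Tri p * \<phi> p + indicator (- Tri) p * \<phi> p" for p
    by (auto simp: indicator_def)
  have E: "integral\<^sup>L (lebesgue \<Otimes>\<^sub>M lebesgue) \<phi> =
     integral\<^sup>L (lebesgue \<Otimes>\<^sub>M lebesgue) (\<lambda>p. indicator Tri p * \<phi> p) +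
     integral\<^sup>L (lebesgue \<Otimes>\<^sub>M lebesgue) (\<lambda>p. indicator (- Tri) p * \<phi> p)"
  proof -
    have "\<phi> = (\<lambda>p. indicator Tri p * \<phi> p + indicator (- Tri) p * \<phi> p)"
      using split by blast
    then have "integral\<^sup>L (lebesgue \<Otimes>\<^sub>M lebesgue) \<phi> = integral\<^sup>L (lebesgue \<Otimes>\<^sub>M lebesgue) (\<lambda>p. indicator Tri p * \<phi> p + indicator (- Tri) p * \<phi> p)"
      by metis
    also have "\<dots> = integral\<^sup>L (lebesgue \<Otimes>\<^sub>M lebesgue) (\<lambda>p. indicator Tri p * \<phi> p) +
     integral\<^sup>L (lebesgue \<Otimes>\<^sub>M lebesgue) (\<lambda>p. indicator (- Tri) p * \<phi> p)"
      by (rule Bochner_Integration.integral_add[OF i1 i2])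
    finally show ?thesis .
  qed
  have E0: "integral\<^sup>L (lebesgue \<Otimes>\<^sub>M lebesgue) \<phi> = integral ?I f * integral ?I g"
  proof -
    have "integral\<^sup>L (lebesgue \<Otimes>\<^sub>M lebesgue) \<phi> = (\<integral>x. (\<integral>y. \<phi> (x, y) \<partial>lebesgue) \<partial>lebesgue)"
      using LL.integral_fst'[OF i\<phi>] by simp
    also have "\<dots> = (\<integral>x. F0 x \<partial>lebesgue) * (\<integral>x. G0 x \<partial>lebesgue)"
      by (simp add: \<phi>_def)
    also have "\<dots> = integral ?I f * integral ?I g"
      using set_lebesgue_integral_eq_integral(2)[OF f] set_lebesgue_integral_eq_integral(2)[OF g]
      by (simp add: F0_def G0_def set_lebesgue_integral_def)
    finally show ?thesis .
  qed
  define Gi where "Gi s = integral {a..s} g" for s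
  define Fi where "Fi s = integral {a..s} f" for s
  have E1: "integral\<^sup>L (lebesgue \<Otimes>\<^sub>M lebesgue) (\<lambda>p. indicator Tri p * \<phi> p) =
       (\<integral>x. F0 x * Gi x \<partial>lebesgue)"
  proof -
    have "integral\<^sup>L (lebesgue \<Otimes>\<^sub>M lebesgue) (\<lambda>p. indicator Tri p * \<phi> p) =
        (\<integral>x. (\<integral>y. indicator Tri (x,y) * \<phi> (x, y) \<partial>lebesgue) \<partial>lebesgue)"
      using LL.integral_fst'[OF i1] by simp
    also have "\<dots> = (\<integral>x. F0 x * Gi x \<partial>lebesgue)"
    proof (rule Bochner_Integration.integral_cong[OF refl])
      fix x :: real
      have "(\<integral>y. indicator Tri (x,y) * \<phi> (x, y) \<partial>lebesgue) = F0 x * (\<integral>y. indicator {..x} y * G0 y \<partial>lebesgue)"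
      proof -
        have "(\<lambda>y. indicator Tri (x,y) * \<phi> (x, y)) = (\<lambda>y. F0 x * (indicator {..x} y * G0 y))"
          by (auto simp: \<phi>_def Tri_def indicator_def)
        then show ?thesis by simp
      qed
      also have "\<dots> = F0 x * Gi x"
      proof (cases "x \<in> ?I")
        case True then show ?thesis using ind_int_eq(1)[OF g True] by (simp add: G0_def Gi_def)
      qed (simp add: F0_def)
      finally show "(\<integral>y. indicator Tri (x,y) * \<phi> (x, y) \<partial>lebesgue) = F0 x * Gi x" .
    qed
    finally show ?thesis .
  qed
  have E2: "integral\<^sup>L (lebesgue \<Otimes>\<^sub>M lebesgue) (\<lambda>p. indicator (- Tri) p * \<phi> p) =
       (\<integral>y. G0 y * Fi y \<partial>lebesgue)"
  proof -
    have "integral\<^sup>L (lebesgue \<Otimes>\<^sub>M lebesgue) (\<lambda>p. indicator (- Tri) p * \<phi> p) =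
        (\<integral>y. (\<integral>x. indicator (- Tri) (x,y) * \<phi> (x, y) \<partial>lebesgue) \<partial>lebesgue)"
    proof -
      have eq: "(\<lambda>(x,y). indicator (- Tri) (x,y) * \<phi> (x, y)) = (\<lambda>p. indicator (- Tri) p * \<phi> p)"
        by auto
      show ?thesis
        using LL.integral_snd[of "\<lambda>x y. indicator (- Tri) (x,y) * \<phi> (x, y)"] i2 unfolding eq by simp
    qed
    also have "\<dots> = (\<integral>y. G0 y * Fi y \<partial>lebesgue)"
    proof (rule Bochner_Integration.integral_cong[OF refl])
      fix y :: real
      have "(\<integral>x. indicator (- Tri) (x,y) * \<phi> (x, y) \<partial>lebesgue) = G0 y * (\<integral>x. indicator {..<y} x * F0 x \<partial>lebesgue)"
      proof -
        have "(\<lambda>x. indicator (- Tri) (x,y) * \<phi> (x, y)) = (\<lambda>x. G0 y * (indicator {..<y} x * F0 x))"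
          by (auto simp: \<phi>_def Tri_def indicator_def not_le)
        then show ?thesis by simp
      qed
      also have "\<dots> = G0 y * Fi y"
      proof (cases "y \<in> ?I")
        case True then show ?thesis using ind_int_eq(2)[OF f True] by (simp add: F0_def Fi_def)
      qed (simp add: G0_def)
      finally show "(\<integral>x. indicator (- Tri) (x,y) * \<phi> (x, y) \<partial>lebesgue) = G0 y * Fi y" .
    qed
    finally show ?thesis .
  qed
  have cG: "continuous_on ?I Gi" unfolding Gi_def
    by (rule indefinite_integral_continuous_1) (use g in \<open>simp add: absolutely_integrable_on_def\<close>)
  have cF: "continuous_on ?I Fi" unfolding Fi_def
    by (rule indefinite_integral_continuous_1) (use f in \<open>simp add: absolutely_integrable_on_def\<close>)
  have a1: "(\<lambda>s. Gi s * f s) absolutely_integrable_on ?I"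
    by (rule absolutely_integrable_bounded_measurable_product_real[OF _ _ _ f])
      (auto intro: continuous_imp_measurable_on_sets_lebesgue[OF cG] compact_imp_bounded compact_continuous_image[OF cG])
  have a2: "(\<lambda>s. Fi s * g s) absolutely_integrable_on ?I"
    by (rule absolutely_integrable_bounded_measurable_product_real[OF _ _ _ g])
      (auto intro: continuous_imp_measurable_on_sets_lebesgue[OF cF] compact_imp_bounded compact_continuous_image[OF cF])
  have h1: "((\<lambda>s. Gi s * f s) has_integral (\<integral>x. F0 x * Gi x \<partial>lebesgue)) ?I"
    using has_integral_set_lebesgue[OF a1] by (simp add: set_lebesgue_integral_def F0_def mult_ac)
  have h2: "((\<lambda>s. Fi s * g s) has_integral (\<integral>x. G0 x * Fi x \<partial>lebesgue)) ?I"
    using has_integral_set_lebesgue[OF a2] by (simp add: set_lebesgue_integral_def G0_def mult_ac)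
  have "((\<lambda>s. Gi s * f s + Fi s * g s) has_integral (integral ?I f * integral ?I g)) ?I"
    using has_integral_add[OF h1 h2] E E0 E1 E2 by simp
  then show ?thesis by (simp add: Gi_def Fi_def mult_ac)
qed

lemma bilinear_expand:
  fixes h :: "'a::euclidean_space \<Rightarrow> 'b::euclidean_space \<Rightarrow> 'c::euclidean_space"
  assumes "bilinear h"
  shows "h x y = (\<Sum>(i,j)\<in>Basis \<times> Basis. ((x \<bullet> i) * (y \<bullet> j)) *\<^sub>R h i j)"
proof -
  have "h x y = h (\<Sum>i\<in>Basis. (x \<bullet> i) *\<^sub>R i) (\<Sum>j\<in>Basis. (y \<bullet> j) *\<^sub>R j)"
    by (simp add: euclidean_representation)
  also have "\<dots> = (\<Sum>(i,j)\<in>Basis \<times> Basis. h ((x \<bullet> i) *\<^sub>R i) ((y \<bullet> j) *\<^sub>R j))"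
    by (rule bilinear_sum[OF assms])
  also have "\<dots> = (\<Sum>(i,j)\<in>Basis \<times> Basis. ((x \<bullet> i) * (y \<bullet> j)) *\<^sub>R h i j)"
    by (rule sum.cong) (auto simp: bilinear_lmul[OF assms] bilinear_rmul[OF assms])
  finally show ?thesis .
qed

lemma bilinear_mm: "bilinear (\<lambda>(x::real^'n^'m) (y::real^'k^'n). x ** y)"
  unfolding bilinear_def
  by (auto intro!: linearI simp: vec_eq_iff matrix_matrix_mult_def sum.distrib algebra_simps sum_distrib_left)

lemma bilinear_mv: "bilinear (\<lambda>(x::real^'n^'m) (y::real^'n). x *v y)"
  unfolding bilinear_def
  by (auto intro!: linearI simp: vec_eq_iff matrix_vector_mult_def sum.distrib algebra_simps sum_distrib_left)


lemma bilin_pr: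
  fixes h :: "'a::euclidean_space \<Rightarrow> 'b::euclidean_space \<Rightarrow> 'c::euclidean_space"
    and f :: "real \<Rightarrow> 'a" and g :: "real \<Rightarrow> 'b"
  assumes h: "bilinear h"
    and f: "f absolutely_integrable_on {a..t}" and g: "g absolutely_integrable_on {a..t}"
  shows "((\<lambda>s. h (f s) (integral {a..s} g) + h (integral {a..s} f) (g s)) has_integral
           h (integral {a..t} f) (integral {a..t} g)) {a..t}"
proof -
  have fi: "f integrable_on {a..s}" if "s \<in> {a..t}" for s
    using f that by (auto simp: absolutely_integrable_on_def intro: integrable_on_subinterval)
  have gi: "g integrable_on {a..s}" if "s \<in> {a..t}" for s
    using g that by (auto simp: absolutely_integrable_on_def intro: integrable_on_subinterval)
  have ij: "((\<lambda>s. ((f s \<bullet> i) * (integral {a..s} g \<bullet> j) + (integral {a..s} f \<bullet> i) * (g s \<bullet> j)) *\<^sub>R h i j)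
      has_integral (((integral {a..t} f \<bullet> i) * (integral {a..t} g \<bullet> j)) *\<^sub>R h i j)) {a..t}" for i j
  proof -
    have "((\<lambda>s. (f s \<bullet> i) * integral {a..s} (\<lambda>x. g x \<bullet> j) + integral {a..s} (\<lambda>x. f x \<bullet> i) * (g s \<bullet> j))
       has_integral (integral {a..t} (\<lambda>x. f x \<bullet> i) * integral {a..t} (\<lambda>x. g x \<bullet> j))) {a..t}"
      by (rule scalar_pr[OF absolutely_integrable_component[OF f] absolutely_integrable_component[OF g]])
    then have "((\<lambda>s. (f s \<bullet> i) * (integral {a..s} g \<bullet> j) + (integral {a..s} f \<bullet> i) * (g s \<bullet> j))
       has_integral (integral {a..t} (\<lambda>x. f x \<bullet> i) * integral {a..t} (\<lambda>x. g x \<bullet> j))) {a..t}"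
      by (rule has_integral_eq[rotated]) (use fi gi in simp)
    moreover have "integral {a..t} (\<lambda>x. f x \<bullet> i) * integral {a..t} (\<lambda>x. g x \<bullet> j) = (integral {a..t} f \<bullet> i) * (integral {a..t} g \<bullet> j)"
        using f g by (simp add: absolutely_integrable_on_def)
    ultimately have "((\<lambda>s. (f s \<bullet> i) * (integral {a..s} g \<bullet> j) + (integral {a..s} f \<bullet> i) * (g s \<bullet> j))
       has_integral ((integral {a..t} f \<bullet> i) * (integral {a..t} g \<bullet> j))) {a..t}" by simp
    then show ?thesis by (rule has_integral_scaleR_left)
  qed
  have "((\<lambda>s. \<Sum>(i,j)\<in>Basis \<times> Basis. ((f s \<bullet> i) * (integral {a..s} g \<bullet> j) + (integral {a..s} f \<bullet> i) * (g s \<bullet> j)) *\<^sub>R h i j)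
      has_integral (\<Sum>(i,j)\<in>Basis \<times> Basis. ((integral {a..t} f \<bullet> i) * (integral {a..t} g \<bullet> j)) *\<^sub>R h i j)) {a..t}"
    by (rule has_integral_sum) (auto intro: ij)
  then show ?thesis
    by (simp add: bilinear_expand[OF h, of "f _"] bilinear_expand[OF h, of "integral _ f"]
         bilinear_expand[OF h, of "integral {a..t} f"] sum.distrib[symmetric] scaleR_add_left case_prod_unfold)
qed



lemma poly_has_integral:
  fixes c L :: real
  assumes "0 \<le> t"
  shows "((\<lambda>s. c * L * (L * s) ^ k / fact k) has_integral (c * (L * t) ^ Suc k / fact (Suc k))) {0..t}"
proof -
  have "((\<lambda>s. c * L * (L * s) ^ k / fact k) has_integral
      ((\<lambda>s. c * (L * s) ^ Suc k / fact (Suc k)) t - (\<lambda>s. c * (L * s) ^ Suc k / fact (Suc k)) 0)) {0..t}"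
  proof (rule fundamental_theorem_of_calculus[OF assms])
    fix x assume "x \<in> {0..t}"
    have fe: "(\<lambda>s. c * (L * s) ^ Suc k / fact (Suc k)) = (\<lambda>s. (c * L ^ Suc k / fact (Suc k)) * s ^ Suc k)"
      by (simp add: power_mult_distrib mult_ac)
    have "((\<lambda>s. (c * L ^ Suc k / fact (Suc k)) * s ^ Suc k) has_real_derivative
        (c * L ^ Suc k / fact (Suc k)) * (real (Suc k) * x ^ (Suc k - Suc 0))) (at x)"
      by (rule DERIV_cmult[OF DERIV_pow])
    then have "((\<lambda>s. c * (L * s) ^ Suc k / fact (Suc k)) has_real_derivative
        c * (real (Suc k) * (L * x) ^ k * L) / fact (Suc k)) (at x within {0..t})"
      unfolding fe by (auto intro: has_field_derivative_at_within simp: power_mult_distrib mult_ac)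
    moreover have "c * (real (Suc k) * (L * x) ^ k * L) / fact (Suc k) = c * L * (L * x) ^ k / fact k"
      by (simp add: fact_Suc field_simps del: of_nat_Suc)
    ultimately have "((\<lambda>s. c * (L * s) ^ Suc k / fact (Suc k)) has_real_derivative
        c * L * (L * x) ^ k / fact k) (at x within {0..t})"
      by metis
    then show "((\<lambda>s. c * (L * s) ^ Suc k / fact (Suc k)) has_vector_derivative
        c * L * (L * x) ^ k / fact k) (at x within {0..t})"
      by (simp only: has_real_derivative_iff_has_vector_derivative)
  qed
  then show ?thesis by simp
qed

lemma step_est:
  fixes h :: "'a::euclidean_space \<Rightarrow> 'b::euclidean_space \<Rightarrow> 'b"
  assumes B: "\<And>x y. norm (h x y) \<le> B * norm x * norm y" and B0: "0 \<le> B"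
    and K: "\<And>s. s \<in> {0..t} \<Longrightarrow> norm (N s) \<le> K"
    and int: "(\<lambda>s. h (N s) (E s)) integrable_on {0..t}"
    and E: "\<And>s. s \<in> {0..t} \<Longrightarrow> norm (E s) \<le> c * (B * K * s) ^ k / fact k"
    and t: "0 \<le> t"
  shows "norm (integral {0..t} (\<lambda>s. h (N s) (E s))) \<le> c * (B * K * t) ^ Suc k / fact (Suc k)"
proof -
  have hi: "((\<lambda>s. c * (B*K) * ((B*K) * s) ^ k / fact k) has_integral (c * ((B*K) * t) ^ Suc k / fact (Suc k))) {0..t}"
    by (rule poly_has_integral[OF t])
  have "norm (integral {0..t} (\<lambda>s. h (N s) (E s))) \<le> integral {0..t} (\<lambda>s. c * (B*K) * ((B*K) * s) ^ k / fact k)"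
  proof (rule integral_norm_bound_integral[OF int])
    show "(\<lambda>s. c * (B*K) * ((B*K) * s) ^ k / fact k) integrable_on {0..t}" using hi by blast
    fix s assume s: "s \<in> {0..t}"
    have "norm (h (N s) (E s)) \<le> B * norm (N s) * norm (E s)" by (rule B)
    also have "\<dots> \<le> B * K * (c * (B * K * s) ^ k / fact k)"
    proof -
      have "0 \<le> norm (E s)" by simp
      then have e0: "0 \<le> c * (B * K * s) ^ k / fact k" using E[OF s] by linarith
      have "B * norm (N s) \<le> B * K" using K[OF s] B0 by (simp add: mult_left_mono)
      then show ?thesis using E[OF s] e0 B0
        by (metis mult_mono norm_ge_zero mult_nonneg_nonneg order_trans)
    qed
    finally show "norm (h (N s) (E s)) \<le> c * (B*K) * ((B*K) * s) ^ k / fact k" by (simp add: mult_ac)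
  qed
  also have "\<dots> = c * (B * K * t) ^ Suc k / fact (Suc k)" by (rule integral_unique[OF hi])
  finally show ?thesis .
qed


lemma bm_prod_int:
  fixes h :: "'a::euclidean_space \<Rightarrow> 'b::euclidean_space \<Rightarrow> 'c::euclidean_space"
    and N :: "real \<Rightarrow> 'a" and P :: "real \<Rightarrow> 'b"
  assumes h: "bilinear h" and Nm: "N \<in> borel_measurable (lebesgue_on {0..T})"
    and Nb: "bounded (N ` {0..T})" and Pc: "continuous_on {0..T} P" and t: "t \<le> T"
  shows "(\<lambda>s. h (N s) (P s)) absolutely_integrable_on {0..t}"
proof -
  have "(\<lambda>s. h (N s) (P s)) absolutely_integrable_on {0..T}"
    by (rule absolutely_integrable_bounded_measurable_product[OF h Nm _ Nb absolutely_integrable_continuous_real[OF Pc]]) simp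
  then show ?thesis by (rule set_integrable_subset) (use t in auto)
qed

lemma exp_term_lim: "(\<lambda>k. C * x ^ k / fact k :: real) \<longlonglongrightarrow> 0"
proof -
  have "(\<lambda>k. inverse (fact k) * x ^ k :: real) \<longlonglongrightarrow> 0"
    by (rule summable_LIMSEQ_zero[OF summable_exp])
  then have "(\<lambda>k. C * (inverse (fact k) * x ^ k) :: real) \<longlonglongrightarrow> C * 0"
    by (intro tendsto_intros)
  then show ?thesis by (simp add: field_simps)
qed

lemma volterra_unique:
  fixes h :: "'a::euclidean_space \<Rightarrow> 'b::euclidean_space \<Rightarrow> 'b" and D :: "real \<Rightarrow> 'b" and N :: "real \<Rightarrow> 'a"
  assumes h: "bilinear h"
    and Nm: "N \<in> borel_measurable (lebesgue_on {0..T})" and Nb: "bounded (N ` {0..T})"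
    and Dc: "continuous_on {0..T} D"
    and eq: "\<And>t. t \<in> {0..T} \<Longrightarrow> D t = integral {0..t} (\<lambda>s. h (N s) (D s))"
    and t: "t \<in> {0..T}"
  shows "D t = 0"
proof -
  obtain B where B0: "B > 0" and B: "\<And>x y. norm (h x y) \<le> B * norm x * norm y"
    using bilinear_bounded_pos[OF h] by blast
  obtain K where K0: "K > 0" and K: "\<And>s. s \<in> {0..T} \<Longrightarrow> norm (N s) \<le> K"
    using Nb by (auto simp: bounded_pos)
  obtain C where C0: "C > 0" and C: "\<And>s. s \<in> {0..T} \<Longrightarrow> norm (D s) \<le> C"
    using compact_imp_bounded[OF compact_continuous_image[OF Dc compact_Icc]] by (auto simp: bounded_pos)
  have main: "\<forall>s\<in>{0..T}. norm (D s) \<le> C * (B * K * s) ^ k / fact k" for k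
  proof (induction k)
    case 0 then show ?case using C by simp
  next
    case (Suc k)
    show ?case
    proof
      fix s assume s: "s \<in> {0..T}"
      have "norm (D s) = norm (integral {0..s} (\<lambda>u. h (N u) (D u)))" using eq[OF s] by simp
      also have "\<dots> \<le> C * (B * K * s) ^ Suc k / fact (Suc k)"
      proof (rule step_est[OF B less_imp_le[OF B0]])
        show "\<And>u. u \<in> {0..s} \<Longrightarrow> norm (N u) \<le> K" using K s by auto
        show "(\<lambda>u. h (N u) (D u)) integrable_on {0..s}"
          using bm_prod_int[OF h Nm Nb Dc, of s] s by (auto simp: absolutely_integrable_on_def)
        show "\<And>u. u \<in> {0..s} \<Longrightarrow> norm (D u) \<le> C * (B * K * u) ^ k / fact k" using Suc s by auto
        show "0 \<le> s" using s by auto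
      qed
      finally show "norm (D s) \<le> C * (B * K * s) ^ Suc k / fact (Suc k)" .
    qed
  qed
  have "norm (D t) \<le> 0"
    using exp_term_lim[of C "B * K * t"] main t
    by (intro LIMSEQ_le_const[where X="\<lambda>k. C * (B * K * t) ^ k / fact k"]) auto
  then show ?thesis by simp
qed


primrec picard :: "('a \<Rightarrow> 'b \<Rightarrow> 'b::euclidean_space) \<Rightarrow> (real \<Rightarrow> 'a) \<Rightarrow> 'b \<Rightarrow> nat \<Rightarrow> real \<Rightarrow> 'b" where
  "picard h N x0 0 = (\<lambda>t. x0)"
| "picard h N x0 (Suc k) = (\<lambda>t. x0 + integral {0..t} (\<lambda>s. h (N s) (picard h N x0 k s)))"

lemma volterra_exists:
  fixes h :: "'a::euclidean_space \<Rightarrow> 'b::euclidean_space \<Rightarrow> 'b" and N :: "real \<Rightarrow> 'a" and x0 :: 'b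
  assumes h: "bilinear h"
    and Nm: "\<And>T. N \<in> borel_measurable (lebesgue_on {0..T})" and Nb: "\<And>T. bounded (N ` {0..T})"
  shows "\<exists>P. (\<forall>T. continuous_on {0..T} P) \<and> (\<forall>t\<ge>0. P t = x0 + integral {0..t} (\<lambda>s. h (N s) (P s)))"
proof -
  define P where "P = picard h N x0"
  have PS: "P (Suc k) t = x0 + integral {0..t} (\<lambda>s. h (N s) (P k s))" for k t
    by (simp add: P_def)
  have P0: "P 0 t = x0" for t by (simp add: P_def)
  have Pc: "continuous_on {0..T} (P k)" for k T
  proof (induction k arbitrary: T)
    case 0 then show ?case by (simp add: P_def)
  next
    case (Suc k)
    have "(\<lambda>s. h (N s) (P k s)) integrable_on {0..T}"
      using bm_prod_int[OF h Nm[of T] Nb[of T] Suc.IH order_refl] by (simp add: absolutely_integrable_on_def)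
    then have "continuous_on {0..T} (\<lambda>t. integral {0..t} (\<lambda>s. h (N s) (P k s)))"
      by (rule indefinite_integral_continuous_1)
    then show ?case unfolding PS[abs_def] by (intro continuous_intros)
  qed
  have Pint: "(\<lambda>s. h (N s) (Q s)) integrable_on {0..t}" if "continuous_on {0..t} Q" for Q t
    using bm_prod_int[OF h Nm[of t] Nb[of t] that order_refl] by (simp add: absolutely_integrable_on_def)
  obtain B where B0: "B > 0" and B: "\<And>x y. norm (h x y) \<le> B * norm x * norm y"
    using bilinear_bounded_pos[OF h] by blast
  define d where "d k t = P (Suc k) t - P k t" for k t
  have Psum: "P n t = x0 + (\<Sum>k<n. d k t)" for n t
    using sum_lessThan_telescope[of "\<lambda>k. P k t" n] by (simp add: d_def P0)
  define S where "S t = (\<Sum>k. d k t)" for t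
  have unif: "uniform_limit {0..T} (\<lambda>n t. \<Sum>k<n. d k t) S sequentially"
    and dsum: "\<forall>t\<in>{0..T}. summable (\<lambda>k. d k t)" for T
  proof -
    obtain K where K0: "K > 0" and K: "\<And>s. s \<in> {0..T} \<Longrightarrow> norm (N s) \<le> K"
      using Nb[of T] by (auto simp: bounded_pos)
    let ?c = "norm x0"
    have db: "\<forall>t\<in>{0..T}. norm (d k t) \<le> ?c * (B * K * t) ^ Suc k / fact (Suc k)" for k
    proof (induction k)
      case 0
      show ?case
      proof
        fix t assume t: "t \<in> {0..T}"
        have "norm (d 0 t) = norm (integral {0..t} (\<lambda>s. h (N s) ((\<lambda>_. x0) s)))"
          by (simp add: d_def PS P0)
        also have "\<dots> \<le> ?c * (B * K * t) ^ Suc 0 / fact (Suc 0)"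
          by (rule step_est[OF B less_imp_le[OF B0]]) (use t K in \<open>auto intro!: Pint\<close>)
        finally show "norm (d 0 t) \<le> ?c * (B * K * t) ^ Suc 0 / fact (Suc 0)" .
      qed
    next
      case (Suc k)
      show ?case
      proof
        fix t assume t: "t \<in> {0..T}"
        have ct: "continuous_on {0..t} (P j)" for j using Pc .
        have "d (Suc k) t = integral {0..t} (\<lambda>s. h (N s) (P (Suc k) s)) - integral {0..t} (\<lambda>s. h (N s) (P k s))"
          by (simp add: d_def PS[of "Suc k"] PS[of k])
        also have "\<dots> = integral {0..t} (\<lambda>s. h (N s) (d k s))"
          by (subst integral_diff[symmetric]) (auto intro!: Pint ct simp: d_def bilinear_rsub[OF h])
        finally have "norm (d (Suc k) t) = norm (integral {0..t} (\<lambda>s. h (N s) (d k s)))" by simp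
        also have "\<dots> \<le> ?c * (B * K * t) ^ Suc (Suc k) / fact (Suc (Suc k))"
        proof (rule step_est[OF B less_imp_le[OF B0]])
          show "(\<lambda>s. h (N s) (d k s)) integrable_on {0..t}"
            unfolding d_def by (rule Pint) (intro continuous_intros ct)
        qed (use t K Suc in auto)
        finally show "norm (d (Suc k) t) \<le> ?c * (B * K * t) ^ Suc (Suc k) / fact (Suc (Suc k))" .
      qed
    qed
    define M where "M k = ?c * (B * K * T) ^ Suc k / fact (Suc k)" for k
    have Mb: "\<forall>t\<in>{0..T}. norm (d k t) \<le> M k" for k
    proof
      fix t assume t: "t \<in> {0..T}"
      have "(B * K * t) ^ Suc k \<le> (B * K * T) ^ Suc k"
        using t B0 K0 by (intro power_mono) (auto intro: mult_left_mono)
      then have "?c * (B * K * t) ^ Suc k / fact (Suc k) \<le> M k"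
        unfolding M_def by (intro divide_right_mono mult_left_mono) auto
      then show "norm (d k t) \<le> M k" using db[of k] t by force
    qed
    have sM: "summable M"
    proof -
      have "summable (\<lambda>k. ?c * (inverse (fact k) * (B * K * T) ^ k))"
        by (intro summable_mult summable_exp)
      then have "summable (\<lambda>k. ?c * (inverse (fact (Suc k)) * (B * K * T) ^ Suc k))"
        by (subst summable_Suc_iff)
      moreover have "M = (\<lambda>k. ?c * (inverse (fact (Suc k)) * (B * K * T) ^ Suc k))"
        by (rule ext) (simp add: M_def divide_inverse mult_ac)
      ultimately show ?thesis by simp
    qed
    show "uniform_limit {0..T} (\<lambda>n t. \<Sum>k<n. d k t) S sequentially"
      unfolding S_def by (rule Weierstrass_m_test[OF _ sM]) (use Mb in auto)
    show "\<forall>t\<in>{0..T}. summable (\<lambda>k. d k t)"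
      using Mb sM by (auto intro: summable_norm_cancel summable_comparison_test')
  qed
  define Q where "Q t = x0 + S t" for t
  have Qc: "continuous_on {0..T} Q" for T
  proof -
    have "continuous_on {0..T} S"
    proof (rule uniform_limit_theorem[OF _ unif])
      show "\<forall>\<^sub>F n in sequentially. continuous_on {0..T} (\<lambda>t. \<Sum>k<n. d k t)"
        unfolding d_def by (intro always_eventually allI continuous_intros Pc)
    qed simp
    then show ?thesis unfolding Q_def by (intro continuous_intros)
  qed
  have PQ: "(\<lambda>n. P n t) \<longlonglongrightarrow> Q t" if "t \<ge> 0" for t
  proof -
    have "(\<lambda>n. \<Sum>k<n. d k t) \<longlonglongrightarrow> S t"
      unfolding S_def by (rule summable_LIMSEQ) (use dsum[of t] that in auto)
    then show ?thesis unfolding Psum Q_def by (intro tendsto_intros)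
  qed
  have eqQ: "Q t = x0 + integral {0..t} (\<lambda>s. h (N s) (Q s))" if t: "t \<ge> 0" for t
  proof -
    obtain K where K0: "K > 0" and K: "\<And>s. s \<in> {0..t} \<Longrightarrow> norm (N s) \<le> K"
      using Nb[of t] by (auto simp: bounded_pos)
    have ulQ: "uniform_limit {0..t} P Q sequentially"
    proof -
      have "uniform_limit {0..t} (\<lambda>n s. x0 + (\<Sum>k<n. d k s)) (\<lambda>s. x0 + S s) sequentially"
        by (intro uniform_limit_intros unif)
      then show ?thesis unfolding Q_def Psum[abs_def] .
    qed
    have "(\<lambda>n. integral {0..t} (\<lambda>s. h (N s) (P n s))) \<longlonglongrightarrow> integral {0..t} (\<lambda>s. h (N s) (Q s))"
    proof (rule LIMSEQ_I)
      fix e :: real assume e: "e > 0"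
      define e' where "e' = e / (2 * (B * K * (t + 1)))"
      have e'0: "e' > 0" unfolding e'_def using e B0 K0 t by auto
      obtain n0 where n0: "\<And>n s. n \<ge> n0 \<Longrightarrow> s \<in> {0..t} \<Longrightarrow> dist (P n s) (Q s) < e'"
        using uniform_limitD[OF ulQ e'0] unfolding eventually_sequentially by blast
      show "\<exists>no. \<forall>n\<ge>no. norm (integral {0..t} (\<lambda>s. h (N s) (P n s)) - integral {0..t} (\<lambda>s. h (N s) (Q s))) < e"
      proof (intro exI allI impI)
        fix n assume n: "n \<ge> n0"
        have "integral {0..t} (\<lambda>s. h (N s) (P n s)) - integral {0..t} (\<lambda>s. h (N s) (Q s))
            = integral {0..t} (\<lambda>s. h (N s) (P n s - Q s))"
          by (subst integral_diff[symmetric]) (auto intro!: Pint Pc Qc simp: bilinear_rsub[OF h])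
        also have "norm \<dots> \<le> integral {0..t} (\<lambda>s. B * K * e')"
        proof (rule integral_norm_bound_integral)
          show "(\<lambda>s. h (N s) (P n s - Q s)) integrable_on {0..t}"
            by (intro Pint continuous_intros Pc Qc)
          fix s assume s: "s \<in> {0..t}"
          have "norm (h (N s) (P n s - Q s)) \<le> B * norm (N s) * norm (P n s - Q s)" by (rule B)
          also have "\<dots> \<le> B * K * e'"
          proof -
            have "norm (P n s - Q s) \<le> e'" using n0[OF n s] by (simp add: dist_norm)
            then show ?thesis using K[OF s] B0 K0
              by (intro mult_mono) (auto intro: mult_left_mono)
          qed
          finally show "norm (h (N s) (P n s - Q s)) \<le> B * K * e'" .
        qed auto
        also have "\<dots> = B * K * e' * t" using t by simp
        also have "\<dots> < e"
        proof -
          define X where "X = B * K * (t + 1)"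
          have X0: "X > 0" unfolding X_def using B0 K0 t by auto
          have "B * K * e' * (t + 1) = X * (e / (2 * X))" unfolding e'_def X_def by (simp add: mult_ac)
          also have "\<dots> = e / 2" using X0 by (simp add: field_simps)
          finally have "B * K * e' * (t + 1) = e / 2" .
          moreover have "B * K * e' * t \<le> B * K * e' * (t + 1)"
            using B0 K0 e'0 by (intro mult_left_mono) auto
          ultimately show ?thesis using e by linarith
        qed
        finally show "norm (integral {0..t} (\<lambda>s. h (N s) (P n s)) - integral {0..t} (\<lambda>s. h (N s) (Q s))) < e" .
      qed
    qed
    then have "(\<lambda>n. P (Suc n) t) \<longlonglongrightarrow> x0 + integral {0..t} (\<lambda>s. h (N s) (Q s))"
      unfolding PS by (intro tendsto_intros)
    moreover have "(\<lambda>n. P (Suc n) t) \<longlonglongrightarrow> Q t"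
      using PQ[OF t] by (rule LIMSEQ_Suc)
    ultimately show ?thesis using LIMSEQ_unique by metis
  qed
  show ?thesis using Qc eqQ by blast
qed



lemma matrix_inv_eq:
  fixes A B :: "real^'n^'n"
  assumes "B ** A = mat 1"
  shows "matrix_inv A = B" "A ** B = mat 1"
proof -
  show AB: "A ** B = mat 1" using assms matrix_left_right_inverse by blast
  have "\<exists>A'. A ** A' = mat 1 \<and> A' ** A = mat 1" using AB assms by blast
  then have *: "A ** matrix_inv A = mat 1 \<and> matrix_inv A ** A = mat 1"
    unfolding matrix_inv_def by (rule someI_ex)
  have "matrix_inv A = matrix_inv A ** (A ** B)" using AB by simp
  also have "\<dots> = (matrix_inv A ** A) ** B" by (simp add: matrix_mul_assoc)
  also have "\<dots> = B" using * by simp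
  finally show "matrix_inv A = B" .
qed

lemma matrix_inv_left':
  fixes A :: "real^'n^'n"
  assumes "\<And>x. A *v x = 0 \<Longrightarrow> x = 0"
  shows "matrix_inv A ** A = mat 1"
proof -
  obtain B where "B ** A = mat 1" using matrix_left_invertible_ker[of A] assms by blast
  then show ?thesis using matrix_inv_eq by metis
qed

lemma locally_lipschitz_cont:
  assumes "locally_lipschitz_on S g"
  shows "continuous_on S g"
proof (clarsimp simp: continuous_on_eq_continuous_within)
  fix x assume x: "x \<in> S"
  obtain e L where e: "e > 0" and L: "L-lipschitz_on (cball x e \<inter> S) g"
    using assms x unfolding locally_lipschitz_on_def by blast
  have "continuous_on (cball x e \<inter> S) g" by (rule lipschitz_on_continuous_on[OF L])
  then have "continuous (at x within (cball x e \<inter> S)) g"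
    using x e by (simp add: continuous_on_eq_continuous_within)
  moreover have "at x within (cball x e \<inter> S) = at x within S"
    by (rule at_within_nhd[of _ "ball x e"]) (use e in auto)
  ultimately show "continuous (at x within S) g" by simp
qed

lemma comp_meas:
  fixes G :: "real \<Rightarrow> 'm::euclidean_space \<Rightarrow> 'c::euclidean_space" and Y :: "real \<Rightarrow> real" and u :: "real \<Rightarrow> 'm"
  assumes Gc: "continuous_on (W \<times> U) (\<lambda>(y,v). G y v)" and U: "closed U"
    and um: "u \<in> borel_measurable lebesgue" and uU: "\<forall>t\<ge>0. u t \<in> U" and ub: "bounded (u ` {0..T})"
    and Yc: "continuous_on {0..T} Y" and YW: "Y ` {0..T} \<subseteq> W"
  shows "(\<lambda>s. G (Y s) (u s)) \<in> borel_measurable (lebesgue_on {0..T})"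
    "bounded ((\<lambda>s. G (Y s) (u s)) ` {0..T})"
proof -
  define K2 where "K2 = closure (u ` {0..T})"
  have K2U: "K2 \<subseteq> U" unfolding K2_def using uU U by (intro closure_minimal) auto
  have cK2: "compact K2" unfolding K2_def using ub by (simp add: compact_closure)
  define K where "K = Y ` {0..T} \<times> K2"
  have cK: "compact K" unfolding K_def using compact_continuous_image[OF Yc compact_Icc] cK2 by (rule compact_Times)
  have KS: "K \<subseteq> W \<times> U" unfolding K_def using YW K2U by auto
  have GK: "continuous_on K (\<lambda>(y,v). G y v)" using Gc KS by (rule continuous_on_subset)
  have img: "(\<lambda>s. (Y s, u s)) ` {0..T} \<subseteq> K" unfolding K_def K2_def by (auto intro: closure_subset[THEN subsetD])
  have "bounded ((\<lambda>(y,v). G y v) ` K)" by (intro compact_imp_bounded compact_continuous_image GK cK)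
  then show "bounded ((\<lambda>s. G (Y s) (u s)) ` {0..T})"
  proof (rule bounded_subset)
    have "(\<lambda>s. G (Y s) (u s)) ` {0..T} = (\<lambda>(y,v). G y v) ` ((\<lambda>s. (Y s, u s)) ` {0..T})"
      by (simp add: image_image)
    also have "\<dots> \<subseteq> (\<lambda>(y,v). G y v) ` K" using img by (rule image_mono)
    finally show "(\<lambda>s. G (Y s) (u s)) ` {0..T} \<subseteq> (\<lambda>(y,v). G y v) ` K" .
  qed
  have clo: "closedin (top_of_set UNIV) K" using closedin_closed_Int[OF compact_imp_closed[OF cK], of UNIV] by simp
  obtain g where gc: "continuous_on UNIV g" and "g ` UNIV \<subseteq> UNIV" and gK: "\<And>x. x \<in> K \<Longrightarrow> g x = (\<lambda>(y,v). G y v) x"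
    using Dugundji[OF convex_UNIV UNIV_not_empty clo GK subset_UNIV] by blast
  have pm: "(\<lambda>s. (Y s, u s)) \<in> borel_measurable (lebesgue_on {0..T})"
  proof -
    have "(\<lambda>s. (Y s, u s)) \<in> measurable (lebesgue_on {0..T}) (borel \<Otimes>\<^sub>M borel)"
      by (intro measurable_Pair continuous_imp_measurable_on_sets_lebesgue[OF Yc] measurable_restrict_space1[OF um]) simp
    then show ?thesis by (simp add: borel_prod)
  qed
  have "(\<lambda>s. g (Y s, u s)) \<in> borel_measurable (lebesgue_on {0..T})"
    using measurable_compose[OF pm borel_measurable_continuous_onI[OF gc]] by (simp add: o_def)
  then show "(\<lambda>s. G (Y s) (u s)) \<in> borel_measurable (lebesgue_on {0..T})"
  proof (rule measurable_cong[THEN iffD1, rotated])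
    fix w assume "w \<in> space (lebesgue_on {0..T})"
    then have "(Y w, u w) \<in> K" using img by auto
    then show "g (Y w, u w) = G (Y w) (u w)" using gK by fastforce
  qed
qed


lemma bilinear_swap: "bilinear h \<Longrightarrow> bilinear (\<lambda>x y. h y x)"
  by (simp add: bilinear_def)

lemma bilin_bl:
  fixes h :: "'a::euclidean_space \<Rightarrow> 'b::euclidean_space \<Rightarrow> 'c::euclidean_space"
  assumes "bilinear h"
  shows "bounded_linear (\<lambda>x. h x y)" "bounded_linear (\<lambda>y. h x y)"
  using assms unfolding bilinear_conv_bounded_bilinear
  by (auto intro: bounded_bilinear.bounded_linear_left bounded_bilinear.bounded_linear_right)

lemma quad_vec:
  fixes q v :: "real^'n"
  shows "(\<chi> i j. q $ i * q $ j) *v v = (q \<bullet> v) *\<^sub>R q"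
  by (simp add: vec_eq_iff matrix_vector_mult_def inner_vec_def sum_distrib_left mult_ac)

lemma quad_form:
  fixes q v :: "real^'n"
  shows "v \<bullet> ((\<chi> i j. q $ i * q $ j) *v v) = (q \<bullet> v)\<^sup>2"
  by (simp add: quad_vec inner_commute power2_eq_square)

lemma linear_transpose_bl: "bounded_linear (transpose :: real^'n^'m \<Rightarrow> real^'m^'n)"
proof -
  have "linear (transpose :: real^'n^'m \<Rightarrow> real^'m^'n)"
    by (rule linearI) (simp_all add: transpose_def vec_eq_iff)
  then show ?thesis by (simp add: linear_conv_bounded_linear)
qed



lemma sol_props:
  assumes sol: "is_solution Ost A b c f1 u \<xi> \<eta> z"
  shows "continuous_on {0..T} z" "\<And>t. t \<ge> 0 \<Longrightarrow> z t \<in> Ost" "z 0 = (\<xi>, \<eta>)"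
    "\<And>t. t \<ge> 0 \<Longrightarrow> ((\<lambda>s. A (snd (z s)) (u s) *v fst (z s) + b (snd (z s)) (u s)) has_integral (fst (z t) - \<xi>)) {0..t}"
    "\<And>t. t \<ge> 0 \<Longrightarrow> ((\<lambda>s. f1 (snd (z s)) (u s) + c (snd (z s)) \<bullet> fst (z s)) has_integral (snd (z t) - \<eta>)) {0..t}"
proof -
  have z0: "z 0 = (\<xi>, \<eta>)" and zO: "\<And>t. t \<ge> 0 \<Longrightarrow> z t \<in> Ost"
    and zi: "\<And>t. t \<ge> 0 \<Longrightarrow> (sys_rhs A b c f1 u z has_integral (z t - z 0)) {0..t}"
    using sol unfolding is_solution_def by auto
  show "z 0 = (\<xi>, \<eta>)" "\<And>t. t \<ge> 0 \<Longrightarrow> z t \<in> Ost" by (fact z0, fact zO)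
  show "continuous_on {0..T} z"
  proof (cases "T \<ge> 0")
    case True
    have int: "sys_rhs A b c f1 u z integrable_on {0..T}" using zi[OF True] by blast
    have "continuous_on {0..T} (\<lambda>t. z 0 + integral {0..t} (sys_rhs A b c f1 u z))"
      by (intro continuous_intros indefinite_integral_continuous_1 int)
    moreover have "z 0 + integral {0..t} (sys_rhs A b c f1 u z) = z t" if "t \<in> {0..T}" for t
      using zi[of t] that by (simp add: integral_unique)
    ultimately show ?thesis by (rule continuous_on_eq)
  qed simp
  fix t :: real assume t: "t \<ge> 0"
  show "((\<lambda>s. A (snd (z s)) (u s) *v fst (z s) + b (snd (z s)) (u s)) has_integral (fst (z t) - \<xi>)) {0..t}"
    using has_integral_linear[OF zi[OF t] bounded_linear_fst] z0 by (simp add: o_def sys_rhs_def)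
  show "((\<lambda>s. f1 (snd (z s)) (u s) + c (snd (z s)) \<bullet> fst (z s)) has_integral (snd (z t) - \<eta>)) {0..t}"
    using has_integral_linear[OF zi[OF t] bounded_linear_snd] z0 by (simp add: o_def sys_rhs_def)
qed

lemma mat_id1:
  fixes P M Q :: "real^'n^'n"
  shows "(P ** - M) ** (Q - mat 1) + (P - mat 1) ** (M ** Q) = P ** M - M ** Q"
proof -
  have "(P ** - M) ** (Q - mat 1) = - ((P ** M) ** Q) + P ** M"
    using bilinear_rneg[OF bilinear_mm, of P M] bilinear_rsub[OF bilinear_mm, of "P ** - M" Q "mat 1"]
      bilinear_lneg[OF bilinear_mm, of "P ** M" Q] by simp
  moreover have "(P - mat 1) ** (M ** Q) = (P ** M) ** Q - M ** Q"
    using bilinear_lsub[OF bilinear_mm, of P "mat 1" "M ** Q"] by (simp add: matrix_mul_assoc)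
  ultimately show ?thesis by simp
qed

lemma mat_id2:
  fixes P Q :: "real^'n^'n"
  shows "(P - mat 1) ** (Q - mat 1) = P ** Q - P - Q + mat 1"
  using bilinear_lsub[OF bilinear_mm, of P "mat 1" "Q - mat 1"] bilinear_rsub[OF bilinear_mm, of P Q "mat 1"]
    bilinear_rsub[OF bilinear_mm, of "mat 1" Q "mat 1"]
  by simp

lemma continuous_on_mv:
  fixes P :: "real \<Rightarrow> real^'n^'m" and v :: "real \<Rightarrow> real^'n"
  assumes "continuous_on S P" "continuous_on S v"
  shows "continuous_on S (\<lambda>s. P s *v v s)"
  using bilinear_mv[where 'n='n and 'm='m] assms unfolding bilinear_conv_bounded_bilinear
  by (intro bounded_bilinear.continuous_on[of "\<lambda>x y. x *v y"]) auto

lemma continuous_on_transpose: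
  fixes P :: "real \<Rightarrow> real^'n^'m"
  assumes "continuous_on S P"
  shows "continuous_on S (\<lambda>s. transpose (P s))"
  using linear_transpose_bl assms by (rule bounded_linear.continuous_on)

theorem corollary2p5:
  fixes Ost :: "((real^'n) \<times> real) set" and U :: "(real^'m) set"
    and A :: "real \<Rightarrow> real^'m \<Rightarrow> real^'n^'n" and b :: "real \<Rightarrow> real^'m \<Rightarrow> real^'n"
    and c :: "real \<Rightarrow> real^'n" and f1 :: "real \<Rightarrow> real^'m \<Rightarrow> real"
    and u :: "real \<Rightarrow> real^'m" and r :: real and x0 :: "real^'n" and y0 :: real
    and \<tau> :: "'n \<Rightarrow> real"
  assumes "open Ost" and "U \<noteq> {}" and "closed U"
    and "locally_lipschitz_on (snd ` Ost \<times> U) (\<lambda>(y, v). A y v)"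
    and "locally_lipschitz_on (snd ` Ost \<times> U) (\<lambda>(y, v). b y v)"
    and "\<forall>j. locally_lipschitz_on (snd ` Ost) (\<lambda>y. c y $ j)"
    and "locally_lipschitz_on (snd ` Ost \<times> U) (\<lambda>(y, v). f1 y v)"
    and "\<forall>\<xi> \<eta> v. (\<xi>, \<eta>) \<in> Ost \<longrightarrow> admissible_input U v \<longrightarrow>
           (\<exists>z. is_solution Ost A b c f1 v \<xi> \<eta> z \<and>
              (\<forall>z'. is_solution Ost A b c f1 v \<xi> \<eta> z' \<longrightarrow> (\<forall>t\<ge>0. z' t = z t)))"
    and "r > 0" and "(x0, y0) \<in> Ost" and "admissible_input U u"
    and "\<forall>i. \<tau> i \<in> {0..r}"
    and "det (\<chi> i. c (ytraj Ost A b c f1 u x0 y0 (\<tau> i)) v* fundmat Ost A b c f1 u x0 y0 (\<tau> i)) \<noteq> 0"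
  shows "strongly_distinguishes Ost A b c f1 u r x0 y0 \<and>
         transpose (Qmat Ost A b c f1 u x0 y0 r) = Qmat Ost A b c f1 u x0 y0 r \<and>
         (\<forall>v. v \<noteq> 0 \<longrightarrow> v \<bullet> (Qmat Ost A b c f1 u x0 y0 r *v v) > 0) \<and>
         x0 = matrix_inv (Qmat Ost A b c f1 u x0 y0 r) *v
                integral {0..r} (\<lambda>t. pfun Ost A b c f1 u x0 y0 t *\<^sub>R qfun Ost A b c f1 u x0 y0 t)"
proof -
  note U = assms(3) and r0 = assms(9) and x0O = assms(10) and tau = assms(12) and detne = assms(13)
  have um: "u \<in> borel_measurable lebesgue" and uU: "\<forall>t\<ge>0. u t \<in> U" and ub: "\<And>T. bounded (u ` {0..T})"
    using assms(11) unfolding admissible_input_def by auto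
  have traj_sol: "is_solution Ost A b c f1 u \<xi> \<eta> (traj Ost A b c f1 u \<xi> \<eta>)" if "(\<xi>, \<eta>) \<in> Ost" for \<xi> \<eta>
  proof -
    have "\<exists>z. is_solution Ost A b c f1 u \<xi> \<eta> z" using assms(8) that assms(11) by blast
    then show ?thesis unfolding traj_def by (rule someI_ex)
  qed
  define W where "W = snd ` Ost"
  define z where "z = traj Ost A b c f1 u x0 y0"
  define Y where "Y = ytraj Ost A b c f1 u x0 y0"
  have Yz: "Y s = snd (z s)" for s by (simp add: Y_def z_def ytraj_def)
  have zsol: "is_solution Ost A b c f1 u x0 y0 z" unfolding z_def by (rule traj_sol[OF x0O])
  have Yc: "continuous_on {0..T} Y" for T
    unfolding Yz[abs_def] by (intro continuous_intros sol_props(1)[OF zsol])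
  have YW: "Y ` {0..T} \<subseteq> W" for T
    using sol_props(2)[OF zsol] by (auto simp: Yz W_def)
  have Ac: "continuous_on (W \<times> U) (\<lambda>(y, v). A y v)" unfolding W_def by (rule locally_lipschitz_cont[OF assms(4)])
  have bc: "continuous_on (W \<times> U) (\<lambda>(y, v). b y v)" unfolding W_def by (rule locally_lipschitz_cont[OF assms(5)])
  have fc: "continuous_on (W \<times> U) (\<lambda>(y, v). f1 y v)" unfolding W_def by (rule locally_lipschitz_cont[OF assms(7)])
  have cc: "continuous_on W c"
  proof -
    have "continuous_on W (\<lambda>y. \<chi> j. c y $ j)"
      using assms(6) by (intro continuous_on_vec_lambda) (auto simp: W_def intro: locally_lipschitz_cont)
    then show ?thesis by simp
  qed
  define M where "M = (\<lambda>s. A (Y s) (u s))"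
  define Bv where "Bv = (\<lambda>s. b (Y s) (u s))"
  define F where "F = (\<lambda>s. f1 (Y s) (u s))"
  define Cv where "Cv = (\<lambda>s. c (Y s))"
  have Mm: "M \<in> borel_measurable (lebesgue_on {0..T})" and Mb: "bounded (M ` {0..T})" for T
    unfolding M_def using comp_meas[OF Ac U um uU ub Yc YW] by auto
  have Bm: "Bv \<in> borel_measurable (lebesgue_on {0..T})" and Bb: "bounded (Bv ` {0..T})" for T
    unfolding Bv_def using comp_meas[OF bc U um uU ub Yc YW] by auto
  have Fm: "F \<in> borel_measurable (lebesgue_on {0..T})" and Fb: "bounded (F ` {0..T})" for T
    unfolding F_def using comp_meas[OF fc U um uU ub Yc YW] by auto
  have Cc: "continuous_on {0..T} Cv" for T
    unfolding Cv_def by (rule continuous_on_compose2[OF cc Yc YW])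
  have bmm: "bilinear (\<lambda>(x::real^'n^'n) (y::real^'n^'n). x ** y)" by (rule bilinear_mm)
  have bmv: "bilinear (\<lambda>(x::real^'n^'n) (y::real^'n). x *v y)" by (rule bilinear_mv)
  have bmm': "bilinear (\<lambda>(x::real^'n^'n) (y::real^'n^'n). y ** x)" by (rule bilinear_swap[OF bilinear_mm])
  have bmv': "bilinear (\<lambda>(x::real^'n) (y::real^'n^'n). y *v x)" by (rule bilinear_swap[OF bilinear_mv])
  define \<Phi> where "\<Phi> = fundmat Ost A b c f1 u x0 y0"
  have \<Phi>P: "\<Phi> 0 = mat 1 \<and> (\<forall>t\<ge>0. ((\<lambda>s. M s ** \<Phi> s) has_integral (\<Phi> t - mat 1)) {0..t})"
  proof -
    obtain P where Pc: "\<And>T. continuous_on {0..T} P"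
      and PE: "\<And>t. t \<ge> 0 \<Longrightarrow> P t = mat 1 + integral {0..t} (\<lambda>s. M s ** P s)"
      using volterra_exists[OF bmm Mm Mb, of "mat 1"] by blast
    have "P 0 = mat 1 \<and> (\<forall>t\<ge>0. ((\<lambda>s. M s ** P s) has_integral (P t - mat 1)) {0..t})"
    proof (intro conjI allI impI)
      show "P 0 = mat 1" using PE[of 0] by simp
      fix t :: real assume t: "t \<ge> 0"
      have "(\<lambda>s. M s ** P s) integrable_on {0..t}"
        using bm_prod_int[OF bmm Mm Mb Pc order_refl] by (simp add: absolutely_integrable_on_def)
      then show "((\<lambda>s. M s ** P s) has_integral (P t - mat 1)) {0..t}"
        using PE[OF t] by (simp add: has_integral_integral)
    qed
    then have "\<exists>P. P 0 = mat 1 \<and> (\<forall>t\<ge>0. ((\<lambda>s. A (ytraj Ost A b c f1 u x0 y0 s) (u s) ** P s) has_integral (P t - mat 1)) {0..t})"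
      by (auto simp: M_def Y_def)
    then have "\<Phi> 0 = mat 1 \<and> (\<forall>t\<ge>0. ((\<lambda>s. A (ytraj Ost A b c f1 u x0 y0 s) (u s) ** \<Phi> s) has_integral (\<Phi> t - mat 1)) {0..t})"
      unfolding \<Phi>_def fundmat_def by (rule someI_ex)
    then show ?thesis by (simp add: M_def Y_def)
  qed
  have \<Phi>hi: "((\<lambda>s. M s ** \<Phi> s) has_integral (\<Phi> t - mat 1)) {0..t}" if "t \<ge> 0" for t
    using \<Phi>P that by blast
  have \<Phi>E: "integral {0..t} (\<lambda>s. M s ** \<Phi> s) = \<Phi> t - mat 1" if "t \<ge> 0" for t
    using \<Phi>hi[OF that] by (rule integral_unique)
  have \<Phi>c: "continuous_on {0..T} \<Phi>" for T
  proof (cases "T \<ge> 0")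
    case True
    have int: "(\<lambda>s. M s ** \<Phi> s) integrable_on {0..T}" using \<Phi>hi[OF True] by blast
    have "continuous_on {0..T} (\<lambda>t. mat 1 + integral {0..t} (\<lambda>s. M s ** \<Phi> s))"
      by (intro continuous_intros indefinite_integral_continuous_1 int)
    moreover have "mat 1 + integral {0..t} (\<lambda>s. M s ** \<Phi> s) = \<Phi> t" if "t \<in> {0..T}" for t
      using \<Phi>E[of t] that by simp
    ultimately show ?thesis by (rule continuous_on_eq)
  qed simp
  have nMm: "(\<lambda>s. - M s) \<in> borel_measurable (lebesgue_on {0..T})" for T
    using Mm[of T] by measurable
  have nMb: "bounded ((\<lambda>s. - M s) ` {0..T})" for T
    using Mb[of T] by (auto simp: bounded_iff)
  obtain \<Psi> where \<Psi>c: "\<And>T. continuous_on {0..T} \<Psi>"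
    and \<Psi>E0: "\<And>t. t \<ge> 0 \<Longrightarrow> \<Psi> t = mat 1 + integral {0..t} (\<lambda>s. \<Psi> s ** (- M s))"
  proof -
    show ?thesis using volterra_exists[OF bmm' nMm nMb, of "mat 1"] that by blast
  qed
  have \<Psi>hi: "((\<lambda>s. \<Psi> s ** (- M s)) has_integral (\<Psi> t - mat 1)) {0..t}" if "t \<ge> 0" for t
  proof -
    have "(\<lambda>s. \<Psi> s ** (- M s)) absolutely_integrable_on {0..t}"
      using bm_prod_int[OF bmm' nMm nMb \<Psi>c order_refl] by simp
    then show ?thesis using \<Psi>E0[OF that] by (simp add: has_integral_integral absolutely_integrable_on_def)
  qed
  have \<Psi>E: "integral {0..t} (\<lambda>s. \<Psi> s ** (- M s)) = \<Psi> t - mat 1" if "t \<ge> 0" for t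
    using \<Psi>hi[OF that] by (rule integral_unique)
  have MPhiA: "(\<lambda>s. M s ** \<Phi> s) absolutely_integrable_on {0..t}" for t
    using bm_prod_int[OF bmm Mm Mb \<Phi>c order_refl] by simp
  have PsiMA: "(\<lambda>s. \<Psi> s ** (- M s)) absolutely_integrable_on {0..t}" for t
    using bm_prod_int[OF bmm' nMm nMb \<Psi>c order_refl] by simp
  have \<Psi>\<Phi>: "\<Psi> t ** \<Phi> t = mat 1" if t: "t \<ge> 0" for t
  proof -
    have "((\<lambda>s. (\<Psi> s ** - M s) ** integral {0..s} (\<lambda>s. M s ** \<Phi> s) +
           integral {0..s} (\<lambda>s. \<Psi> s ** - M s) ** (M s ** \<Phi> s)) has_integral
          (integral {0..t} (\<lambda>s. \<Psi> s ** - M s) ** integral {0..t} (\<lambda>s. M s ** \<Phi> s))) {0..t}"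
      using bilin_pr[OF bmm PsiMA MPhiA] by simp
    then have "((\<lambda>s. \<Psi> s ** M s - M s ** \<Phi> s) has_integral ((\<Psi> t - mat 1) ** (\<Phi> t - mat 1))) {0..t}"
    proof (rule has_integral_eq[rotated, THEN has_integral_eq_rhs])
      fix s assume "s \<in> {0..t}"
      then show "(\<Psi> s ** - M s) ** integral {0..s} (\<lambda>s. M s ** \<Phi> s) +
           integral {0..s} (\<lambda>s. \<Psi> s ** - M s) ** (M s ** \<Phi> s) = \<Psi> s ** M s - M s ** \<Phi> s"
        using \<Phi>E[of s] \<Psi>E[of s] mat_id1 by simp
    qed (use t \<Phi>E \<Psi>E in simp)
    moreover have "((\<lambda>s. \<Psi> s ** M s - M s ** \<Phi> s) has_integral (- (\<Psi> t - mat 1) - (\<Phi> t - mat 1))) {0..t}"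
    proof (rule has_integral_diff[OF _ \<Phi>hi[OF t]])
      have "((\<lambda>s. - (\<Psi> s ** - M s)) has_integral - (\<Psi> t - mat 1)) {0..t}"
        by (rule has_integral_neg[OF \<Psi>hi[OF t]])
      then show "((\<lambda>s. \<Psi> s ** M s) has_integral - (\<Psi> t - mat 1)) {0..t}"
        by (simp add: bilinear_rneg[OF bilinear_mm])
    qed
    ultimately have "(\<Psi> t - mat 1) ** (\<Phi> t - mat 1) = - (\<Psi> t - mat 1) - (\<Phi> t - mat 1)"
      by (rule has_integral_unique)
    then show ?thesis by (simp add: mat_id2 algebra_simps)
  qed
  have \<Phi>\<Psi>: "\<Phi> t ** \<Psi> t = mat 1" and inv\<Phi>: "matrix_inv (\<Phi> t) = \<Psi> t" if "t \<ge> 0" for t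
    using matrix_inv_eq[OF \<Psi>\<Phi>[OF that]] by auto
  define \<theta> where "\<theta> = theta Ost A b c f1 u x0 y0"
  define G where "G = (\<lambda>t. integral {0..t} (\<lambda>\<tau>. \<Psi> \<tau> *v Bv \<tau>))"
  have PsiBA: "(\<lambda>s. \<Psi> s *v Bv s) absolutely_integrable_on {0..t}" for t
    using bm_prod_int[OF bmv' Bm Bb \<Psi>c order_refl] by simp
  have PsiBi: "(\<lambda>s. \<Psi> s *v Bv s) integrable_on {0..t}" for t
    using PsiBA by (simp add: absolutely_integrable_on_def)
  have \<theta>G: "\<theta> t = \<Phi> t *v G t" if t: "t \<ge> 0" for t
  proof -
    have "\<theta> t = integral {0..t} (\<lambda>\<tau>. (\<Phi> t ** matrix_inv (\<Phi> \<tau>)) *v Bv \<tau>)"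
      by (simp add: \<theta>_def theta_def \<Phi>_def Y_def Bv_def)
    also have "\<dots> = integral {0..t} (\<lambda>\<tau>. \<Phi> t *v (\<Psi> \<tau> *v Bv \<tau>))"
      by (rule integral_cong) (simp add: inv\<Phi> matrix_vector_mul_assoc)
    also have "\<dots> = \<Phi> t *v G t"
      unfolding G_def using integral_linear[OF PsiBi bilin_bl(2)[OF bmv, of "\<Phi> t"]] by (simp add: o_def)
    finally show ?thesis .
  qed
  have Gc: "continuous_on {0..T} G" for T
    unfolding G_def by (rule indefinite_integral_continuous_1[OF PsiBi])
  have \<theta>c: "continuous_on {0..T} \<theta>" for T
  proof -
    have "continuous_on {0..T} (\<lambda>t. \<Phi> t *v G t)"
      using bmv unfolding bilinear_conv_bounded_bilinear
      by (intro bounded_bilinear.continuous_on[of "\<lambda>x y. x *v y"] \<Phi>c Gc) auto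
    then show ?thesis by (rule continuous_on_eq) (simp add: \<theta>G)
  qed
  have \<theta>hi: "((\<lambda>s. M s *v \<theta> s + Bv s) has_integral \<theta> t) {0..t}" if t: "t \<ge> 0" for t
  proof -
    have "((\<lambda>s. (M s ** \<Phi> s) *v integral {0..s} (\<lambda>s. \<Psi> s *v Bv s) +
           integral {0..s} (\<lambda>s. M s ** \<Phi> s) *v (\<Psi> s *v Bv s)) has_integral
          (integral {0..t} (\<lambda>s. M s ** \<Phi> s) *v integral {0..t} (\<lambda>s. \<Psi> s *v Bv s))) {0..t}"
      using bilin_pr[OF bmv MPhiA PsiBA] by simp
    then have "((\<lambda>s. M s *v \<theta> s + (Bv s - \<Psi> s *v Bv s)) has_integral ((\<Phi> t - mat 1) *v G t)) {0..t}"
    proof (rule has_integral_eq[rotated, THEN has_integral_eq_rhs])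
      fix s assume s: "s \<in> {0..t}"
      have "(\<Phi> s - mat 1) *v (\<Psi> s *v Bv s) = Bv s - \<Psi> s *v Bv s"
      proof -
        have "(\<Phi> s - mat 1) *v (\<Psi> s *v Bv s) = \<Phi> s *v (\<Psi> s *v Bv s) - \<Psi> s *v Bv s"
          by (simp add: matrix_vector_mult_diff_rdistrib)
        moreover have "\<Phi> s *v (\<Psi> s *v Bv s) = Bv s"
          using \<Phi>\<Psi>[of s] s by (simp add: matrix_vector_mul_assoc)
        ultimately show ?thesis by simp
      qed
      then show "(M s ** \<Phi> s) *v integral {0..s} (\<lambda>s. \<Psi> s *v Bv s) +
           integral {0..s} (\<lambda>s. M s ** \<Phi> s) *v (\<Psi> s *v Bv s) = M s *v \<theta> s + (Bv s - \<Psi> s *v Bv s)"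
        using \<Phi>E[of s] \<theta>G[of s] s by (simp add: G_def matrix_vector_mul_assoc)
    qed (use t \<Phi>E in \<open>simp add: G_def\<close>)
    from has_integral_add[OF this integrable_integral[OF PsiBi[of t]]]
    show ?thesis using \<theta>G[OF t] by (simp add: G_def matrix_vector_mult_diff_rdistrib)
  qed
  define q where "q = qfun Ost A b c f1 u x0 y0"
  have qdef: "q t = integral {0..t} (\<lambda>s. transpose (\<Phi> s) *v Cv s)" for t
    by (simp add: q_def qfun_def \<Phi>_def Y_def Cv_def)
  have qic: "continuous_on {0..T} (\<lambda>s. transpose (\<Phi> s) *v Cv s)" for T
    by (intro continuous_on_mv continuous_on_transpose \<Phi>c Cc)
  have qc: "continuous_on {0..T} q" for T
    unfolding qdef[abs_def] by (intro indefinite_integral_continuous_1 integrable_continuous_real qic)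
  have FA: "F absolutely_integrable_on {0..t}" for t
    using bm_prod_int[OF bilinear_times Fm Fb continuous_on_const[of _ 1] order_refl] by simp
  have FI: "F integrable_on {0..t}" for t using FA by (simp add: absolutely_integrable_on_def)
  have rep: "fst (zz t) = \<Phi> t *v \<xi> + \<theta> t \<and>
      snd (zz t) - \<eta> - integral {0..t} F - integral {0..t} (\<lambda>s. Cv s \<bullet> \<theta> s) = q t \<bullet> \<xi>"
    if sol: "is_solution Ost A b c f1 u \<xi> \<eta> zz" and same: "\<forall>s\<in>{0..r}. snd (zz s) = Y s"
      and t: "t \<in> {0..r}" for \<xi> \<eta> zz t
  proof -
    define xh where "xh = (\<lambda>s. fst (zz s))"
    have xc: "continuous_on {0..r} xh" unfolding xh_def by (intro continuous_intros sol_props(1)[OF sol])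
    have xhi: "((\<lambda>s. M s *v xh s + Bv s) has_integral (xh t' - \<xi>)) {0..t'}" if t': "t' \<in> {0..r}" for t'
    proof -
      have "((\<lambda>s. A (snd (zz s)) (u s) *v fst (zz s) + b (snd (zz s)) (u s)) has_integral (fst (zz t') - \<xi>)) {0..t'}"
        using sol_props(4)[OF sol, of t'] t' by simp
      then show ?thesis unfolding xh_def
        by (rule has_integral_eq[rotated]) (use same t' in \<open>auto simp: M_def Bv_def\<close>)
    qed
    define D where "D = (\<lambda>s. xh s - \<Phi> s *v \<xi> - \<theta> s)"
    have Dc: "continuous_on {0..r} D" unfolding D_def
      by (intro continuous_intros continuous_on_mv xc \<Phi>c \<theta>c)
    have Dhi: "((\<lambda>s. M s *v D s) has_integral D t') {0..t'}" if t': "t' \<in> {0..r}" for t'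
    proof -
      have t0: "t' \<ge> 0" using t' by auto
      have h1: "((\<lambda>s. M s *v (\<Phi> s *v \<xi>)) has_integral (\<Phi> t' *v \<xi> - \<xi>)) {0..t'}"
        using has_integral_linear[OF \<Phi>hi[OF t0] bilin_bl(1)[OF bmv, of \<xi>]]
        by (simp add: o_def matrix_vector_mul_assoc matrix_vector_mult_diff_rdistrib)
      have "((\<lambda>s. (M s *v xh s + Bv s) - M s *v (\<Phi> s *v \<xi>) - (M s *v \<theta> s + Bv s)) has_integral
          ((xh t' - \<xi>) - (\<Phi> t' *v \<xi> - \<xi>) - \<theta> t')) {0..t'}"
        by (intro has_integral_diff xhi[OF t'] h1 \<theta>hi[OF t0])
      then show ?thesis
        by (simp add: D_def matrix_vector_mult_diff_distrib algebra_simps)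
    qed
    have D0: "D s = 0" if s: "s \<in> {0..r}" for s
    proof (rule volterra_unique[OF bmv Mm[of r] Mb[of r] Dc _ s])
      fix t' assume "t' \<in> {0..r}"
      then show "D t' = integral {0..t'} (\<lambda>s. M s *v D s)" using integral_unique[OF Dhi] by metis
    qed
    have xrep: "xh s = \<Phi> s *v \<xi> + \<theta> s" if "s \<in> {0..r}" for s
      using D0[OF that] by (simp add: D_def algebra_simps)
    have yhi: "((\<lambda>s. F s + Cv s \<bullet> (\<Phi> s *v \<xi>) + Cv s \<bullet> \<theta> s) has_integral (snd (zz t) - \<eta>)) {0..t}"
    proof -
      have "((\<lambda>s. f1 (snd (zz s)) (u s) + c (snd (zz s)) \<bullet> fst (zz s)) has_integral (snd (zz t) - \<eta>)) {0..t}"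
        using sol_props(5)[OF sol, of t] t by simp
      then show ?thesis
      proof (rule has_integral_eq[rotated])
        fix s assume s: "s \<in> {0..t}"
        then have sr: "s \<in> {0..r}" using t by auto
        show "f1 (snd (zz s)) (u s) + c (snd (zz s)) \<bullet> fst (zz s) = F s + Cv s \<bullet> (\<Phi> s *v \<xi>) + Cv s \<bullet> \<theta> s"
          using same sr xrep[OF sr] by (simp add: F_def Cv_def xh_def inner_add_right)
      qed
    qed
    have c1: "continuous_on {0..t} (\<lambda>s. Cv s \<bullet> (\<Phi> s *v \<xi>))"
      by (intro continuous_intros continuous_on_mv Cc \<Phi>c)
    have c2: "continuous_on {0..t} (\<lambda>s. Cv s \<bullet> \<theta> s)"
      by (intro continuous_intros Cc \<theta>c)
    have "integral {0..t} (\<lambda>s. F s + Cv s \<bullet> (\<Phi> s *v \<xi>) + Cv s \<bullet> \<theta> s) =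
        integral {0..t} F + integral {0..t} (\<lambda>s. Cv s \<bullet> (\<Phi> s *v \<xi>)) + integral {0..t} (\<lambda>s. Cv s \<bullet> \<theta> s)"
      using FI integrable_continuous_real[OF c1] integrable_continuous_real[OF c2]
      by (simp add: integral_add integrable_add)
    moreover have "integral {0..t} (\<lambda>s. Cv s \<bullet> (\<Phi> s *v \<xi>)) = q t \<bullet> \<xi>"
    proof -
      have "q t \<bullet> \<xi> = integral {0..t} (\<lambda>s. (transpose (\<Phi> s) *v Cv s) \<bullet> \<xi>)"
        unfolding qdef using integrable_continuous_real[OF qic] by simp
      also have "\<dots> = integral {0..t} (\<lambda>s. Cv s \<bullet> (\<Phi> s *v \<xi>))"
        by (simp add: dot_lmul_matrix)
      finally show ?thesis by simp
    qed
    ultimately have "snd (zz t) - \<eta> - integral {0..t} F - integral {0..t} (\<lambda>s. Cv s \<bullet> \<theta> s) = q t \<bullet> \<xi>"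
      using integral_unique[OF yhi] by simp
    then show ?thesis using xrep[OF t] by (simp add: xh_def)
  qed
  have pq: "pfun Ost A b c f1 u x0 y0 t = q t \<bullet> x0" if t: "t \<in> {0..r}" for t
  proof -
    have "pfun Ost A b c f1 u x0 y0 t = snd (z t) - y0 - integral {0..t} F - integral {0..t} (\<lambda>s. Cv s \<bullet> \<theta> s)"
      by (simp add: pfun_def F_def Cv_def \<theta>_def Y_def z_def ytraj_def)
    then show ?thesis using rep[OF zsol _ t] by (simp add: Yz)
  qed
  define R where "R = (\<lambda>t. \<chi> i j. q t $ i * q t $ j)"
  have Qm: "Qmat Ost A b c f1 u x0 y0 r = integral {0..r} R"
    by (simp add: Qmat_def R_def q_def)
  have Rc: "continuous_on {0..r} R"
    unfolding R_def by (intro continuous_on_vec_lambda continuous_intros qc)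
  have RI: "R integrable_on {0..r}" by (rule integrable_continuous_real[OF Rc])
  have symQ: "transpose (integral {0..r} R) = integral {0..r} R"
  proof -
    have "transpose (integral {0..r} R) = integral {0..r} (\<lambda>t. transpose (R t))"
      using integral_linear[OF RI linear_transpose_bl] by (simp add: o_def)
    also have "\<dots> = integral {0..r} R"
      by (rule integral_cong) (simp add: R_def transpose_def vec_eq_iff mult.commute)
    finally show ?thesis .
  qed
  have quadQ: "v \<bullet> (integral {0..r} R *v v) = integral {0..r} (\<lambda>t. (q t \<bullet> v)\<^sup>2)" for v
  proof -
    have bl: "bounded_linear (\<lambda>X. v \<bullet> (X *v v))"
      using bounded_linear_compose[OF bounded_linear_inner_right bilin_bl(1)[OF bmv, of v]] by simp
    have "v \<bullet> (integral {0..r} R *v v) = integral {0..r} (\<lambda>t. v \<bullet> (R t *v v))"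
      using integral_linear[OF RI bl] by (simp add: o_def)
    also have "\<dots> = integral {0..r} (\<lambda>t. (q t \<bullet> v)\<^sup>2)"
      by (simp add: R_def quad_form)
    finally show ?thesis .
  qed
  have qgc: "continuous_on {0..r} (\<lambda>t. (q t \<bullet> v)\<^sup>2)" for v
    by (intro continuous_intros qc)
  have posQ: "v \<bullet> (integral {0..r} R *v v) > 0" if v: "v \<noteq> 0" for v
  proof (rule ccontr)
    assume "\<not> v \<bullet> (integral {0..r} R *v v) > 0"
    then have le: "integral {0..r} (\<lambda>t. (q t \<bullet> v)\<^sup>2) \<le> 0" using quadQ by simp
    have ge: "0 \<le> integral {0..r} (\<lambda>t. (q t \<bullet> v)\<^sup>2)"
      by (rule Henstock_Kurzweil_Integration.integral_nonneg[OF integrable_continuous_real[OF qgc]]) simp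
    have hi0: "((\<lambda>t. (q t \<bullet> v)\<^sup>2) has_integral 0) (cbox 0 r)"
      using integrable_integral[OF integrable_continuous_real[OF qgc[of v]]] le ge by simp
    have qv0: "q t \<bullet> v = 0" if t: "t \<in> {0..r}" for t
    proof -
      have "(q t \<bullet> v)\<^sup>2 = 0"
        by (rule has_integral_0_cbox_imp_0[OF _ _ hi0]) (use qgc[of v] r0 t in auto)
      then show ?thesis by simp
    qed
    define g where "g = (\<lambda>s. Cv s \<bullet> (\<Phi> s *v v))"
    have gc: "continuous_on {0..r} g" unfolding g_def by (intro continuous_intros continuous_on_mv Cc \<Phi>c)
    have qg: "q t \<bullet> v = integral {0..t} g" if "t \<in> {0..r}" for t
    proof -
      have "q t \<bullet> v = integral {0..t} (\<lambda>s. (transpose (\<Phi> s) *v Cv s) \<bullet> v)"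
        unfolding qdef using integrable_continuous_real[OF qic] by simp
      also have "\<dots> = integral {0..t} g" by (simp add: g_def dot_lmul_matrix)
      finally show ?thesis .
    qed
    have g0: "g t = 0" if t: "t \<in> {0..r}" for t
    proof -
      have d1: "((\<lambda>u. integral {0..u} g) has_vector_derivative g t) (at t within cbox 0 r)"
        using integral_has_vector_derivative[OF gc t] by simp
      have d2: "((\<lambda>u. integral {0..u} g) has_vector_derivative 0) (at t within cbox 0 r)"
      proof (rule has_vector_derivative_transform[where f="\<lambda>u. 0"])
        show "t \<in> cbox 0 r" using t by simp
        fix x assume "x \<in> cbox 0 r"
        then show "integral {0..x} g = 0" using qg[of x] qv0[of x] by simp
      qed (rule has_vector_derivative_const)
      show ?thesis using vector_derivative_unique_within_closed_interval[OF r0 _ d1 d2] t by simp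
    qed
    define Rm where "Rm = (\<chi> i. c (ytraj Ost A b c f1 u x0 y0 (\<tau> i)) v* fundmat Ost A b c f1 u x0 y0 (\<tau> i))"
    have "Rm *v v = 0"
    proof -
      have "(Rm *v v) $ i = 0" for i
      proof -
        have "(Rm *v v) $ i = (Cv (\<tau> i) v* \<Phi> (\<tau> i)) \<bullet> v"
          by (simp add: Rm_def matrix_vector_mult_def inner_vec_def Cv_def Y_def \<Phi>_def)
        also have "\<dots> = g (\<tau> i)" by (simp add: g_def dot_lmul_matrix)
        also have "\<dots> = 0" using g0 tau by blast
        finally show ?thesis .
      qed
      then show ?thesis by (simp add: vec_eq_iff)
    qed
    moreover have "invertible Rm" using detne by (simp add: Rm_def invertible_det_nz)
    ultimately have "v = 0" using inj_matrix_vector_mult[of Rm] by (metis injD matrix_vector_mult_0_right)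
    then show False using v by simp
  qed
  have Qinj: "integral {0..r} R *v w = 0 \<Longrightarrow> w = 0" for w
    using posQ[of w] by fastforce
  have pfe: "pfun Ost A b c f1 u x0 y0 t = snd (z t) - y0 - integral {0..t} F - integral {0..t} (\<lambda>s. Cv s \<bullet> \<theta> s)" for t
    by (simp add: pfun_def F_def Cv_def \<theta>_def Y_def z_def ytraj_def)
  have xform: "x0 = matrix_inv (integral {0..r} R) *v
                integral {0..r} (\<lambda>t. pfun Ost A b c f1 u x0 y0 t *\<^sub>R qfun Ost A b c f1 u x0 y0 t)"
  proof -
    have "integral {0..r} (\<lambda>t. pfun Ost A b c f1 u x0 y0 t *\<^sub>R qfun Ost A b c f1 u x0 y0 t)
        = integral {0..r} (\<lambda>t. R t *v x0)"
      by (rule integral_cong) (simp add: pq q_def[symmetric] R_def quad_vec)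
    also have "\<dots> = integral {0..r} R *v x0"
      using integral_linear[OF RI bilin_bl(1)[OF bmv, of x0]] by (simp add: o_def)
    finally have "integral {0..r} (\<lambda>t. pfun Ost A b c f1 u x0 y0 t *\<^sub>R qfun Ost A b c f1 u x0 y0 t)
        = integral {0..r} R *v x0" .
    then show ?thesis
      using matrix_inv_left'[OF Qinj] by (simp add: matrix_vector_mul_assoc)
  qed
  have sd: "strongly_distinguishes Ost A b c f1 u r x0 y0"
    unfolding strongly_distinguishes_def
  proof (intro allI impI)
    fix \<xi> \<eta> assume H: "(\<xi>, \<eta>) \<in> Ost \<and> (\<xi>, \<eta>) \<noteq> (x0, y0)"
    define zz where "zz = traj Ost A b c f1 u \<xi> \<eta>"
    have sol: "is_solution Ost A b c f1 u \<xi> \<eta> zz" unfolding zz_def using traj_sol H by blast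
    have Yh: "ytraj Ost A b c f1 u \<xi> \<eta> s = snd (zz s)" for s by (simp add: zz_def ytraj_def)
    show "(SUP t\<in>{0..r}. \<bar>ytraj Ost A b c f1 u x0 y0 t - ytraj Ost A b c f1 u \<xi> \<eta> t\<bar>) > 0"
    proof (rule ccontr)
      assume "\<not> ?thesis"
      then have S0: "(SUP t\<in>{0..r}. \<bar>Y t - snd (zz t)\<bar>) \<le> 0" by (simp add: Y_def Yh)
      have dc: "continuous_on {0..r} (\<lambda>t. \<bar>Y t - snd (zz t)\<bar>)"
        by (intro continuous_intros Yc sol_props(1)[OF sol])
      have bdd: "bdd_above ((\<lambda>t. \<bar>Y t - snd (zz t)\<bar>) ` {0..r})"
        by (rule bounded_imp_bdd_above[OF compact_imp_bounded[OF compact_continuous_image[OF dc compact_Icc]]])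
      have same: "\<forall>s\<in>{0..r}. snd (zz s) = Y s"
      proof
        fix s assume s: "s \<in> {0..r}"
        have "\<bar>Y s - snd (zz s)\<bar> \<le> (SUP t\<in>{0..r}. \<bar>Y t - snd (zz t)\<bar>)"
          by (rule cSUP_upper[OF s bdd])
        then show "snd (zz s) = Y s" using S0 by simp
      qed
      have eta: "\<eta> = y0"
      proof -
        have "snd (zz 0) = Y 0" using same r0 by auto
        then show ?thesis using sol_props(3)[OF sol] sol_props(3)[OF zsol] by (simp add: Yz)
      qed
      have qd: "q t \<bullet> (\<xi> - x0) = 0" if t: "t \<in> {0..r}" for t
      proof -
        have "q t \<bullet> \<xi> = pfun Ost A b c f1 u x0 y0 t"
          using rep[OF sol same t] same t eta by (simp add: pfe Yz)
        then show ?thesis using pq[OF t] by (simp add: inner_diff_right)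
      qed
      have "(\<xi> - x0) \<bullet> (integral {0..r} R *v (\<xi> - x0)) = integral {0..r} (\<lambda>t. (q t \<bullet> (\<xi> - x0))\<^sup>2)"
        by (rule quadQ)
      also have "\<dots> = integral {0..r} (\<lambda>t. 0::real)"
        by (rule integral_cong) (simp add: qd)
      finally have "(\<xi> - x0) \<bullet> (integral {0..r} R *v (\<xi> - x0)) = 0" by simp
      then have "\<xi> - x0 = 0" using posQ[of "\<xi> - x0"] by (metis less_irrefl)
      then show False using H eta by simp
    qed
  qed
  show ?thesis using sd symQ posQ xform by (simp add: Qm)
qed


end
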